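(* For $P\in\mathcal P(\mathcal X)$, $\Delta\ge0$ and $E\ge0$, the inverse of Blahut's exponent, $R_{\rm B}(E\mid\Delta,P):=\sup\{R\in[0,R_{\max}(\Delta)]: E_{\rm B}(R\mid\Delta,P)\le E\}$, satisfies $$R_{\rm B}(E\mid\Delta,P)=\inf_{\mu\ge0}\ \sup_{\nu\ge0}\Big[\mu E-\nu\Delta+\min_{p_Y\in\mathcal P(\mathcal Y)}G^{(\mu,\nu)}(p_Y\mid P)\Big].$$
   Context: $\mathcal X,\mathcal Y$ finite nonempty sets; $\mathcal P(\cdot)$ probability distributions. Distortion measure $d:\mathcal X\times\mathcal Y\to[0,\infty)$ with $\max_x\min_y d(x,y)=0$. Natural logs. $R(\Delta\mid q)$ is the rate-distortion function $\min\{I(q,V): \sum_{x,y}q(x)V(y|x)d(x,y)\le\Delta\}$ and $R_{\max}(\Delta)=\max_q R(\Delta\mid q)$. Blahut's exponent: $E_{\rm B}(R\mid\Delta,P)=\sup_{\rho\ge0}\Big[\rho R+\inf_{\nu\ge0}\Big\{\rho\nu\Delta-\min_{p_Y\in\mathcal P(\mathcal Y)}\log\sum_{x}P(x)\big(\sum_y p_Y(y)e^{-\nu d(x,y)}\big)^{-\rho}\Big\}\Big]$. For $\mu,\nu\ge0$: $G^{(\mu,\nu)}(p_Y\mid P)=\mu\log\sum_x P(x)\big(\sum_y p_Y(y)e^{-\nu d(x,y)}\big)^{-1/\mu}$ if $\mu>0$, and $G^{(0,\nu)}(p_Y\mid P)=-\log\min_{x}\sum_y p_Y(y)e^{-\nu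 d(x,y)}$. *)

theory Defs
  imports "HOL-Analysis.Analysis" "HOL-Library.Extended_Real"
begin

definition pdists :: "('a::finite \<Rightarrow> real) set" where
  "pdists = {p. (\<forall>a. 0 \<le> p a) \<and> (\<Sum>a\<in>UNIV. p a) = 1}"

text \<open>Channels V(y|x), written V x y.\<close>
definition channels :: "('x::finite \<Rightarrow> 'y::finite \<Rightarrow> real) set" where
  "channels = {V. \<forall>x. V x \<in> pdists}"

definition out_dist :: "('x::finite \<Rightarrow> real) \<Rightarrow> ('x \<Rightarrow> 'y::finite \<Rightarrow> real) \<Rightarrow> 'y \<Rightarrow> real" where
  "out_dist q V y = (\<Sum>x\<in>UNIV. q x * V x y)"

definition mutual_info :: "('x::finite \<Rightarrow> real) \<Rightarrow> ('x \<Rightarrow> 'y::finite \<Rightarrow> real) \<Rightarrow> real" where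
  "mutual_info q V = (\<Sum>x\<in>UNIV. \<Sum>y\<in>UNIV.
     (if q x * V x y = 0 then 0 else q x * V x y * ln (V x y / out_dist q V y)))"

definition avg_dist :: "('x::finite \<Rightarrow> real) \<Rightarrow> ('x \<Rightarrow> 'y::finite \<Rightarrow> real) \<Rightarrow> ('x \<Rightarrow> 'y \<Rightarrow> real) \<Rightarrow> real" where
  "avg_dist q V d = (\<Sum>x\<in>UNIV. \<Sum>y\<in>UNIV. q x * V x y * d x y)"

definition RD :: "('x::finite \<Rightarrow> 'y::finite \<Rightarrow> real) \<Rightarrow> real \<Rightarrow> ('x \<Rightarrow> real) \<Rightarrow> ereal" where
  "RD d \<Delta> q = (INF V\<in>{V\<in>channels. avg_dist q V d \<le> \<Delta>}. ereal (mutual_info q V))"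

definition Rmax :: "('x::finite \<Rightarrow> 'y::finite \<Rightarrow> real) \<Rightarrow> real \<Rightarrow> ereal" where
  "Rmax d \<Delta> = (SUP q\<in>pdists. RD d \<Delta> q)"

definition EB :: "('x::finite \<Rightarrow> 'y::finite \<Rightarrow> real) \<Rightarrow> real \<Rightarrow> real \<Rightarrow> ('x \<Rightarrow> real) \<Rightarrow> ereal" where
  "EB d R \<Delta> P = (SUP \<rho>\<in>{0..}. ereal (\<rho> * R) +
     (INF \<nu>\<in>{0..}. ereal (\<rho> * \<nu> * \<Delta>) -
        (INF pY\<in>(pdists :: ('y \<Rightarrow> real) set).
           ereal (ln (\<Sum>x\<in>UNIV. P x * (\<Sum>y\<in>UNIV. pY y * exp (- \<nu> * d x y)) powr (- \<rho>))))))"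

definition RB :: "('x::finite \<Rightarrow> 'y::finite \<Rightarrow> real) \<Rightarrow> real \<Rightarrow> real \<Rightarrow> ('x \<Rightarrow> real) \<Rightarrow> ereal" where
  "RB d E \<Delta> P = Sup (ereal ` {R. 0 \<le> R \<and> ereal R \<le> Rmax d \<Delta> \<and> EB d R \<Delta> P \<le> ereal E})"

definition G :: "('x::finite \<Rightarrow> 'y::finite \<Rightarrow> real) \<Rightarrow> real \<Rightarrow> real \<Rightarrow> ('y \<Rightarrow> real) \<Rightarrow> ('x \<Rightarrow> real) \<Rightarrow> real" where
  "G d \<mu> \<nu> pY P =
     (if \<mu> > 0 then \<mu> * ln (\<Sum>x\<in>UNIV. P x * (\<Sum>y\<in>UNIV. pY y * exp (- \<nu> * d x y)) powr (- 1 / \<mu>))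
      else - ln (Min (range (\<lambda>x. \<Sum>y\<in>UNIV. pY y * exp (- \<nu> * d x y)))))"

end

theory Submission
  imports Defs
begin

definition sfun :: "('x::finite \<Rightarrow> 'y::finite \<Rightarrow> real) \<Rightarrow> ('y \<Rightarrow> real) \<Rightarrow> real \<Rightarrow> 'x \<Rightarrow> real" where
  "sfun d pY \<nu> x = (\<Sum>y\<in>UNIV. pY y * exp (- \<nu> * d x y))"

lemma pdists_nonempty: "(\<lambda>_. 1 / real CARD('a::finite)) \<in> (pdists :: ('a \<Rightarrow> real) set)"
  by (simp add: pdists_def)

lemma pdists_ne: "(pdists :: ('a::finite \<Rightarrow> real) set) \<noteq> {}"
  using pdists_nonempty by blast

lemma sfun_pos:
  assumes "pY \<in> pdists"
  shows "0 < sfun d pY \<nu> x"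
proof -
  have nn: "\<forall>y. 0 \<le> pY y" and s1: "(\<Sum>y\<in>UNIV. pY y) = 1" using assms by (auto simp: pdists_def)
  then obtain y0 where "pY y0 \<noteq> 0" by (metis sum.neutral zero_neq_one)
  with nn have "0 < pY y0" by (simp add: less_le)
  then have "0 < pY y0 * exp (- \<nu> * d x y0)" by simp
  then show ?thesis unfolding sfun_def
    by (intro sum_pos2[of UNIV y0]) (auto simp: nn)
qed

lemma sfun_le1:
  assumes "pY \<in> pdists" "0 \<le> \<nu>" "\<forall>x y. 0 \<le> d x y"
  shows "sfun d pY \<nu> x \<le> 1"
proof -
  have nn: "\<forall>y. 0 \<le> pY y" and s1: "(\<Sum>y\<in>UNIV. pY y) = 1" using assms by (auto simp: pdists_def)
  have "sfun d pY \<nu> x \<le> (\<Sum>y\<in>UNIV. pY y)" unfolding sfun_def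
  proof (rule sum_mono)
    fix y
    have "exp (- \<nu> * d x y) \<le> 1" using assms by (simp add: mult_nonneg_nonneg)
    then show "pY y * exp (- \<nu> * d x y) \<le> pY y" using nn by (simp add: mult_left_le)
  qed
  then show ?thesis using s1 by simp
qed

lemma sfun_zero: "pY \<in> pdists \<Longrightarrow> sfun d pY 0 x = 1"
  by (simp add: sfun_def pdists_def)

lemma powr_neg_ge1: fixes s \<rho> :: real assumes "0 < s" "s \<le> 1" "0 \<le> \<rho>" shows "1 \<le> s powr (- \<rho>)"
proof -
  have "s powr \<rho> \<le> 1" using assms by (intro powr_le1) auto
  moreover have "0 < s powr \<rho>" using \<open>0 < s\<close> by simp
  ultimately show ?thesis by (simp add: powr_minus one_le_inverse_iff)
qed

lemma sumP_ge1:
  assumes P: "P \<in> pdists" and h: "\<And>x. 1 \<le> f x"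
  shows "1 \<le> (\<Sum>x\<in>UNIV. P x * f x)"
proof -
  have "(\<Sum>x\<in>UNIV. P x) \<le> (\<Sum>x\<in>UNIV. P x * f x)"
    using P h by (intro sum_mono) (auto simp: pdists_def intro: mult_left_mono[of 1 _ "P _", simplified])
  then show ?thesis using P by (simp add: pdists_def)
qed


definition Lf :: "('x::finite \<Rightarrow> 'y::finite \<Rightarrow> real) \<Rightarrow> ('x \<Rightarrow> real) \<Rightarrow> real \<Rightarrow> real \<Rightarrow> ('y \<Rightarrow> real) \<Rightarrow> real" where
  "Lf d P \<rho> \<nu> pY = ln (\<Sum>x\<in>UNIV. P x * sfun d pY \<nu> x powr (- \<rho>))"

definition Lr :: "('x::finite \<Rightarrow> 'y::finite \<Rightarrow> real) \<Rightarrow> ('x \<Rightarrow> real) \<Rightarrow> real \<Rightarrow> real \<Rightarrow> real" where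
  "Lr d P \<rho> \<nu> = Inf (Lf d P \<rho> \<nu> ` pdists)"

definition Gr :: "('x::finite \<Rightarrow> 'y::finite \<Rightarrow> real) \<Rightarrow> ('x \<Rightarrow> real) \<Rightarrow> real \<Rightarrow> real \<Rightarrow> real" where
  "Gr d P \<mu> \<nu> = Inf ((\<lambda>pY. G d \<mu> \<nu> pY P) ` pdists)"

lemma Lf_nonneg:
  assumes "P \<in> pdists" "pY \<in> pdists" "0 \<le> \<rho>" "0 \<le> \<nu>" "\<forall>x y. 0 \<le> d x y"
  shows "0 \<le> Lf d P \<rho> \<nu> pY"
proof -
  have "1 \<le> (\<Sum>x\<in>UNIV. P x * sfun d pY \<nu> x powr (- \<rho>))"
    using assms by (intro sumP_ge1 powr_neg_ge1 sfun_pos sfun_le1) auto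
  then show ?thesis unfolding Lf_def by simp
qed

lemma G_pos: "0 < \<mu> \<Longrightarrow> G d \<mu> \<nu> pY P = \<mu> * Lf d P (1/\<mu>) \<nu> pY"
  by (simp add: G_def Lf_def sfun_def)

lemma G_zero: "G d 0 \<nu> pY P = - ln (Min (range (sfun d pY \<nu>)))"
  by (simp add: G_def sfun_def[abs_def])

lemma Min_sfun:
  obtains x0 where "Min (range (sfun d pY \<nu>)) = sfun d pY \<nu> x0"
    "\<And>x. sfun d pY \<nu> x0 \<le> sfun d pY \<nu> x"
proof -
  have "Min (range (sfun d pY \<nu>)) \<in> range (sfun d pY \<nu>)" by (intro Min_in) auto
  then obtain x0 where x0: "Min (range (sfun d pY \<nu>)) = sfun d pY \<nu> x0" by (metis imageE)
  have "\<And>x. Min (range (sfun d pY \<nu>)) \<le> sfun d pY \<nu> x" by (intro Min_le) auto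
  with x0 that show ?thesis by metis
qed

lemma G_nonneg:
  assumes "P \<in> pdists" "pY \<in> pdists" "0 \<le> \<mu>" "0 \<le> \<nu>" "\<forall>x y. 0 \<le> d x y"
  shows "0 \<le> G d \<mu> \<nu> pY P"
proof (cases "\<mu> = 0")
  case True
  obtain x0 where x0: "Min (range (sfun d pY \<nu>)) = sfun d pY \<nu> x0" by (metis Min_sfun)
  have "0 < sfun d pY \<nu> x0" "sfun d pY \<nu> x0 \<le> 1" using assms by (auto intro: sfun_pos sfun_le1)
  then show ?thesis using True x0 by (simp add: G_zero)
next
  case False
  then have "0 < \<mu>" using assms by simp
  then show ?thesis using assms by (simp add: G_pos Lf_nonneg)
qed

lemma Lf_le_G0:
  assumes "P \<in> pdists" "pY \<in> pdists" "0 \<le> \<rho>" "0 \<le> \<nu>" "\<forall>x y. 0 \<le> d x y"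
  shows "Lf d P \<rho> \<nu> pY \<le> \<rho> * G d 0 \<nu> pY P"
proof -
  obtain x0 where x0: "Min (range (sfun d pY \<nu>)) = sfun d pY \<nu> x0"
    "\<And>x. sfun d pY \<nu> x0 \<le> sfun d pY \<nu> x" by (metis Min_sfun)
  define m where "m = sfun d pY \<nu> x0"
  have m0: "0 < m" unfolding m_def using assms by (auto intro: sfun_pos)
  have "(\<Sum>x\<in>UNIV. P x * sfun d pY \<nu> x powr (- \<rho>)) \<le> (\<Sum>x\<in>UNIV. P x * m powr (- \<rho>))"
  proof (rule sum_mono)
    fix x
    have "sfun d pY \<nu> x powr (- \<rho>) \<le> m powr (- \<rho>)"
      using assms m0 x0(2)[of x] by (intro powr_mono2') (auto simp: m_def)
    then show "P x * sfun d pY \<nu> x powr (- \<rho>) \<le> P x * m powr (- \<rho>)"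
      using assms(1) by (intro mult_left_mono) (auto simp: pdists_def)
  qed
  also have "\<dots> = m powr (- \<rho>)" using assms(1) by (simp add: pdists_def flip: sum_distrib_right)
  finally have le: "(\<Sum>x\<in>UNIV. P x * sfun d pY \<nu> x powr (- \<rho>)) \<le> m powr (- \<rho>)" .
  have pos: "0 < (\<Sum>x\<in>UNIV. P x * sfun d pY \<nu> x powr (- \<rho>))"
    using sumP_ge1[OF assms(1), of "\<lambda>x. sfun d pY \<nu> x powr (- \<rho>)"] assms
    by (smt (verit) powr_neg_ge1 sfun_le1 sfun_pos)
  have "Lf d P \<rho> \<nu> pY \<le> ln (m powr (- \<rho>))" unfolding Lf_def using le pos by (subst ln_le_cancel_iff) auto
  also have "\<dots> = \<rho> * (- ln m)" using m0 by (simp add: ln_powr)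
  finally show ?thesis by (simp add: G_zero x0(1) m_def)
qed

lemma Lf_nu0: "P \<in> pdists \<Longrightarrow> pY \<in> pdists \<Longrightarrow> Lf d P \<rho> 0 pY = 0"
  by (simp add: Lf_def sfun_zero pdists_def)

lemma G_nu0: "P \<in> pdists \<Longrightarrow> pY \<in> pdists \<Longrightarrow> G d \<mu> 0 pY P = 0"
  by (cases "\<mu> > 0") (simp_all add: G_pos Lf_nu0 G_def sfun_zero[unfolded sfun_def] pdists_def)

lemma bdd_Lf:
  assumes "P \<in> pdists" "0 \<le> \<rho>" "0 \<le> \<nu>" "\<forall>x y. 0 \<le> d x y"
  shows "bdd_below (Lf d P \<rho> \<nu> ` pdists)"
  using assms Lf_nonneg by (intro bdd_belowI[of _ 0]) blast

lemma bdd_G: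
  assumes "P \<in> pdists" "0 \<le> \<mu>" "0 \<le> \<nu>" "\<forall>x y. 0 \<le> d x y"
  shows "bdd_below ((\<lambda>pY. G d \<mu> \<nu> pY P) ` pdists)"
  using assms G_nonneg by (intro bdd_belowI[of _ 0]) blast

lemma INF_ereal_Lf:
  assumes "P \<in> pdists" "0 \<le> \<rho>" "0 \<le> \<nu>" "\<forall>x y. 0 \<le> d x y"
  shows "(INF pY\<in>pdists. ereal (Lf d P \<rho> \<nu> pY)) = ereal (Lr d P \<rho> \<nu>)"
proof -
  have "ereal (Inf (Lf d P \<rho> \<nu> ` pdists)) = (INF pY\<in>pdists. ereal (Lf d P \<rho> \<nu> pY))"
    using ereal_Inf'[OF bdd_Lf[OF assms]] pdists_ne by (simp add: image_comp)
  then show ?thesis unfolding Lr_def by simp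
qed

lemma INF_ereal_G:
  assumes "P \<in> pdists" "0 \<le> \<mu>" "0 \<le> \<nu>" "\<forall>x y. 0 \<le> d x y"
  shows "(INF pY\<in>pdists. ereal (G d \<mu> \<nu> pY P)) = ereal (Gr d P \<mu> \<nu>)"
proof -
  have "ereal (Inf ((\<lambda>pY. G d \<mu> \<nu> pY P) ` pdists)) = (INF pY\<in>pdists. ereal (G d \<mu> \<nu> pY P))"
    using ereal_Inf'[OF bdd_G[OF assms]] pdists_ne by (simp add: image_comp)
  then show ?thesis unfolding Gr_def by simp
qed

lemma Lr_le: "P \<in> pdists \<Longrightarrow> 0 \<le> \<rho> \<Longrightarrow> 0 \<le> \<nu> \<Longrightarrow> \<forall>x y. 0 \<le> d x y \<Longrightarrow> pY \<in> pdists
   \<Longrightarrow> Lr d P \<rho> \<nu> \<le> Lf d P \<rho> \<nu> pY"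
  unfolding Lr_def by (intro cInf_lower bdd_Lf) auto

lemma Gr_le: "P \<in> pdists \<Longrightarrow> 0 \<le> \<mu> \<Longrightarrow> 0 \<le> \<nu> \<Longrightarrow> \<forall>x y. 0 \<le> d x y \<Longrightarrow> pY \<in> pdists
   \<Longrightarrow> Gr d P \<mu> \<nu> \<le> G d \<mu> \<nu> pY P"
  unfolding Gr_def by (intro cInf_lower bdd_G) auto

lemma Lr_nu0: "P \<in> pdists \<Longrightarrow> Lr d P \<rho> 0 = 0"
  unfolding Lr_def by (simp add: Lf_nu0 pdists_ne cong: image_cong)

lemma Gr_nu0: "P \<in> pdists \<Longrightarrow> Gr d P \<mu> 0 = 0"
  unfolding Gr_def by (simp add: G_nu0 pdists_ne cong: image_cong)


lemma gibbs:
  fixes v w c :: "'y::finite \<Rightarrow> real"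
  assumes v: "v \<in> pdists" and opos: "\<forall>y. 0 < v y \<longrightarrow> 0 < w y" and onn: "\<forall>y. 0 \<le> w y"
  shows "- ln (\<Sum>y\<in>UNIV. w y * exp (- \<nu> * c y)) \<le>
    (\<Sum>y\<in>UNIV. (if v y = 0 then 0 else v y * ln (v y / w y))) + \<nu> * (\<Sum>y\<in>UNIV. v y * c y)"
proof -
  have vnn: "\<forall>y. 0 \<le> v y" and v1: "(\<Sum>y\<in>UNIV. v y) = 1" using v by (auto simp: pdists_def)
  define Yp where "Yp = {y. 0 < v y}"
  define a where "a y = w y * exp (- \<nu> * c y)" for y
  have apos: "y \<in> Yp \<Longrightarrow> 0 < a y" for y using opos by (simp add: Yp_def a_def)
  have ann: "0 \<le> a y" for y using onn by (simp add: a_def)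
  have vYp: "(\<Sum>y\<in>Yp. v y) = 1"
  proof -
    have "(\<Sum>y\<in>UNIV. v y) = (\<Sum>y\<in>Yp. v y)"
      using vnn by (intro sum.mono_neutral_right) (auto simp: Yp_def less_le)
    then show ?thesis using v1 by simp
  qed
  have Ypne: "Yp \<noteq> {}" using vYp by auto
  define S where "S = (\<Sum>y\<in>Yp. a y)"
  have S0: "0 < S" unfolding S_def using Ypne apos by (intro sum_pos) auto
  have Sle: "S \<le> (\<Sum>y\<in>UNIV. a y)" unfolding S_def using ann by (intro sum_mono2) auto
  have key: "(\<Sum>y\<in>Yp. v y * ln (a y / v y)) \<le> ln S"
  proof -
    have "(\<Sum>y\<in>Yp. v y * ln (a y / v y)) - ln S = (\<Sum>y\<in>Yp. v y * (ln (a y / v y) - ln S))"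
      using vYp by (simp add: right_diff_distrib sum_subtractf flip: sum_distrib_right)
    also have "\<dots> = (\<Sum>y\<in>Yp. v y * ln (a y / (v y * S)))"
    proof (rule sum.cong)
      fix y assume "y \<in> Yp"
      then have "0 < v y" "0 < a y" using apos by (auto simp: Yp_def)
      then show "v y * (ln (a y / v y) - ln S) = v y * ln (a y / (v y * S))"
        using S0 by (simp add: ln_div ln_mult)
    qed simp
    also have "\<dots> \<le> (\<Sum>y\<in>Yp. v y * (a y / (v y * S) - 1))"
    proof (rule sum_mono)
      fix y assume "y \<in> Yp"
      then have "0 < v y" "0 < a y" using apos by (auto simp: Yp_def)
      then have "ln (a y / (v y * S)) \<le> a y / (v y * S) - 1" using S0 by (intro ln_le_minus_one) simp
      then show "v y * ln (a y / (v y * S)) \<le> v y * (a y / (v y * S) - 1)"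
        using \<open>0 < v y\<close> by (intro mult_left_mono) auto
    qed
    also have "\<dots> = (\<Sum>y\<in>Yp. a y / S - v y)"
      by (rule sum.cong) (auto simp: Yp_def field_simps)
    also have "\<dots> = 0" using vYp S0 by (simp add: sum_subtractf S_def flip: sum_divide_distrib)
    finally show ?thesis by simp
  qed
  have eq: "(\<Sum>y\<in>Yp. v y * ln (a y / v y)) =
     - (\<Sum>y\<in>Yp. v y * ln (v y / w y)) - \<nu> * (\<Sum>y\<in>Yp. v y * c y)"
  proof -
    have "(\<Sum>y\<in>Yp. v y * ln (a y / v y)) = (\<Sum>y\<in>Yp. - (v y * ln (v y / w y)) - \<nu> * (v y * c y))"
    proof (rule sum.cong)
      fix y assume "y \<in> Yp"
      then have "0 < v y" "0 < w y" using opos by (auto simp: Yp_def)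
      then show "v y * ln (a y / v y) = - (v y * ln (v y / w y)) - \<nu> * (v y * c y)"
        by (simp add: a_def ln_div ln_mult algebra_simps)
    qed simp
    then show ?thesis by (simp add: sum_subtractf sum_negf sum_distrib_left)
  qed
  have e1: "(\<Sum>y\<in>UNIV. (if v y = 0 then 0 else v y * ln (v y / w y))) = (\<Sum>y\<in>Yp. v y * ln (v y / w y))"
  proof -
    have "(\<Sum>y\<in>UNIV. (if v y = 0 then 0 else v y * ln (v y / w y))) =
       (\<Sum>y\<in>Yp. (if v y = 0 then 0 else v y * ln (v y / w y)))"
      using vnn by (intro sum.mono_neutral_right) (auto simp: Yp_def less_le)
    also have "\<dots> = (\<Sum>y\<in>Yp. v y * ln (v y / w y))" by (rule sum.cong) (auto simp: Yp_def)
    finally show ?thesis .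
  qed
  have e2: "(\<Sum>y\<in>UNIV. v y * c y) = (\<Sum>y\<in>Yp. v y * c y)"
    using vnn by (intro sum.mono_neutral_right) (auto simp: Yp_def less_le)
  have "- ln (\<Sum>y\<in>UNIV. a y) \<le> - ln S" using S0 Sle by simp
  also have "\<dots> \<le> - (\<Sum>y\<in>Yp. v y * ln (a y / v y))" using key by simp
  finally show ?thesis using eq e1 e2 by (simp add: a_def)
qed


lemma out_dist_pdists:
  assumes q: "q \<in> pdists" and V: "V \<in> channels"
  shows "out_dist q V \<in> pdists"
proof -
  have Vx: "\<And>x. V x \<in> pdists" using V by (simp add: channels_def)
  have nn: "0 \<le> out_dist q V y" for y unfolding out_dist_def
    using q Vx by (intro sum_nonneg mult_nonneg_nonneg) (auto simp: pdists_def)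
  have "(\<Sum>y\<in>UNIV. out_dist q V y) = (\<Sum>x\<in>UNIV. q x * (\<Sum>y\<in>UNIV. V x y))"
    unfolding out_dist_def by (subst sum.swap) (simp add: sum_distrib_left)
  also have "\<dots> = 1" using q Vx by (simp add: pdists_def)
  finally show ?thesis using nn by (simp add: pdists_def)
qed

lemma weak_duality:
  assumes q: "q \<in> pdists" and V: "V \<in> channels"
  shows "(\<Sum>x\<in>UNIV. q x * (- ln (sfun d (out_dist q V) \<nu> x))) \<le> mutual_info q V + \<nu> * avg_dist q V d"
proof -
  have Vx: "\<And>x. V x \<in> pdists" using V by (simp add: channels_def)
  have qnn: "\<And>x. 0 \<le> q x" using q by (simp add: pdists_def)
  have Vnn: "\<And>x y. 0 \<le> V x y" using Vx by (simp add: pdists_def)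
  have onn: "\<forall>y. 0 \<le> out_dist q V y" using out_dist_pdists[OF q V] by (simp add: pdists_def)
  have per: "q x * (- ln (sfun d (out_dist q V) \<nu> x)) \<le>
     (\<Sum>y\<in>UNIV. (if q x * V x y = 0 then 0 else q x * V x y * ln (V x y / out_dist q V y)))
     + \<nu> * (\<Sum>y\<in>UNIV. q x * V x y * d x y)" for x
  proof (cases "q x = 0")
    case True then show ?thesis by simp
  next
    case False
    then have qx: "0 < q x" using qnn by (simp add: less_le)
    have opos: "\<forall>y. 0 < V x y \<longrightarrow> 0 < out_dist q V y"
    proof (intro allI impI)
      fix y assume "0 < V x y"
      then have "0 < q x * V x y" using qx by simp
      also have "q x * V x y \<le> out_dist q V y" unfolding out_dist_def
        using qnn Vnn by (intro member_le_sum[where f = "\<lambda>x. q x * V x y"]) auto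
      finally show "0 < out_dist q V y" .
    qed
    have g: "- ln (sfun d (out_dist q V) \<nu> x) \<le>
      (\<Sum>y\<in>UNIV. (if V x y = 0 then 0 else V x y * ln (V x y / out_dist q V y))) + \<nu> * (\<Sum>y\<in>UNIV. V x y * d x y)"
      unfolding sfun_def using gibbs[OF Vx opos onn, of \<nu> "d x"] by simp
    have "q x * (- ln (sfun d (out_dist q V) \<nu> x)) \<le>
      q x * ((\<Sum>y\<in>UNIV. (if V x y = 0 then 0 else V x y * ln (V x y / out_dist q V y))) + \<nu> * (\<Sum>y\<in>UNIV. V x y * d x y))"
      using g qx by (intro mult_left_mono) auto
    also have "\<dots> = (\<Sum>y\<in>UNIV. (if q x * V x y = 0 then 0 else q x * V x y * ln (V x y / out_dist q V y)))
     + \<nu> * (\<Sum>y\<in>UNIV. q x * V x y * d x y)"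
      using qx by (simp add: distrib_left sum_distrib_left mult.assoc mult.left_commute if_distrib cong: if_cong)
    finally show ?thesis .
  qed
  have "(\<Sum>x\<in>UNIV. q x * (- ln (sfun d (out_dist q V) \<nu> x))) \<le>
    (\<Sum>x\<in>UNIV. (\<Sum>y\<in>UNIV. (if q x * V x y = 0 then 0 else q x * V x y * ln (V x y / out_dist q V y)))
     + \<nu> * (\<Sum>y\<in>UNIV. q x * V x y * d x y))"
    by (intro sum_mono per)
  also have "\<dots> = mutual_info q V + \<nu> * avg_dist q V d"
    by (simp add: mutual_info_def avg_dist_def sum.distrib sum_distrib_left)
  finally show ?thesis .
qed


lemma strict_comb:
  fixes a1 a2 b1 b2 u w :: real
  assumes "a1 < b1" "a2 < b2" "0 \<le> u" "0 \<le> w" "u + w = 1"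
  shows "u * a1 + w * a2 < u * b1 + w * b2"
proof (cases "u = 0")
  case True then show ?thesis using assms by simp
next
  case False
  then have "0 < u" using assms by simp
  then have "u * a1 < u * b1" using assms by simp
  moreover have "w * a2 \<le> w * b2" using assms by (intro mult_left_mono) auto
  ultimately show ?thesis by simp
qed

lemma neg_ln_convex:
  fixes s1 s2 u w :: real
  assumes "0 < s1" "0 < s2" "0 \<le> u" "0 \<le> w" "u + w = 1"
  shows "- ln (u * s1 + w * s2) \<le> u * (- ln s1) + w * (- ln s2)"
proof -
  have "u * ln s1 + w * ln s2 \<le> ln (u *\<^sub>R s1 + w *\<^sub>R s2)"
    using ln_concave assms unfolding concave_on_iff by auto
  then show ?thesis by simp
qed

lemma sfun_comb:
  "sfun d (\<lambda>y. u * p1 y + w * p2 y) \<nu> x = u * sfun d p1 \<nu> x + w * sfun d p2 \<nu> x"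
  by (simp add: sfun_def sum.distrib sum_distrib_left distrib_right mult.assoc)

lemma pdists_comb:
  assumes "p1 \<in> pdists" "p2 \<in> pdists" "0 \<le> u" "0 \<le> w" "u + w = 1"
  shows "(\<lambda>y. u * p1 y + w * p2 y) \<in> pdists"
  using assms by (auto simp: pdists_def sum.distrib simp flip: sum_distrib_left)

lemma sum_delta_add:
  fixes a b :: "'x::finite \<Rightarrow> real"
  shows "(\<Sum>x\<in>UNIV. a x * (b x + (if x = x0 then t else 0))) = (\<Sum>x\<in>UNIV. a x * b x) + a x0 * t"
proof -
  have "(\<Sum>x\<in>UNIV. a x * (b x + (if x = x0 then t else 0))) =
     (\<Sum>x\<in>UNIV. a x * b x) + (\<Sum>x\<in>UNIV. a x * (if x = x0 then t else 0))"
    by (simp only: distrib_left sum.distrib)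
  also have "(\<Sum>x\<in>UNIV. a x * (if x = x0 then t else 0)) = (\<Sum>x\<in>UNIV. (if x = x0 then a x * t else 0))"
    by (rule sum.cong) auto
  also have "\<dots> = a x0 * t" by (simp add: sum.delta)
  finally show ?thesis .
qed

lemma minimax_sep:
  fixes d :: "'x::finite \<Rightarrow> 'y::finite \<Rightarrow> real"
  assumes P: "P \<in> pdists" and dnn: "\<forall>x y. 0 \<le> d x y" and nu: "0 \<le> \<nu>"
  shows "\<exists>q\<in>pdists. \<forall>pY\<in>(pdists :: ('y \<Rightarrow> real) set).
            Gr d P 0 \<nu> \<le> (\<Sum>x\<in>UNIV. q x * (- ln (sfun d pY \<nu> x)))"
proof -
  define v where "v = Gr d P 0 \<nu>"
  define \<phi> where "\<phi> pY x = - ln (sfun d pY \<nu> x)" for pY :: "'y \<Rightarrow> real" and x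
  define U where "U = {z :: real^'x. \<exists>pY\<in>pdists. \<forall>x. \<phi> pY x - v < z$x}"
  have cU: "convex U"
  proof (rule convexI)
    fix z1 z2 :: "real^'x" and u w :: real
    assume z1: "z1 \<in> U" and z2: "z2 \<in> U" and uw: "0 \<le> u" "0 \<le> w" "u + w = 1"
    obtain p1 where p1: "p1 \<in> pdists" "\<forall>x. \<phi> p1 x - v < z1$x" using z1 by (auto simp: U_def)
    obtain p2 where p2: "p2 \<in> pdists" "\<forall>x. \<phi> p2 x - v < z2$x" using z2 by (auto simp: U_def)
    define p where "p = (\<lambda>y. u * p1 y + w * p2 y)"
    have p: "p \<in> pdists" unfolding p_def using p1 p2 uw by (intro pdists_comb)
    have "\<phi> p x - v < (u *\<^sub>R z1 + w *\<^sub>R z2)$x" for x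
    proof -
      have "\<phi> p x \<le> u * \<phi> p1 x + w * \<phi> p2 x"
        unfolding \<phi>_def p_def sfun_comb using uw p1 p2 by (intro neg_ln_convex sfun_pos) auto
      moreover have "u * v + w * v = v" using uw by (metis distrib_right mult_1)
      ultimately have "\<phi> p x - v \<le> u * (\<phi> p1 x - v) + w * (\<phi> p2 x - v)" by (simp add: algebra_simps)
      also have "\<dots> < u * z1$x + w * z2$x" using p1 p2 uw by (intro strict_comb) auto
      finally show ?thesis by simp
    qed
    then show "u *\<^sub>R z1 + w *\<^sub>R z2 \<in> U" using p by (auto simp: U_def)
  qed
  have n0: "0 \<notin> U"
  proof
    assume "0 \<in> U"
    then obtain pY where pY: "pY \<in> pdists" "\<forall>x. \<phi> pY x < v" by (auto simp: U_def)
    obtain x0 where x0: "Min (range (sfun d pY \<nu>)) = sfun d pY \<nu> x0" by (metis Min_sfun)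
    have "G d 0 \<nu> pY P = \<phi> pY x0" by (simp add: G_zero x0 \<phi>_def)
    also have "\<dots> < v" using pY by simp
    also have "v \<le> G d 0 \<nu> pY P" unfolding v_def using P dnn nu pY by (intro Gr_le) auto
    finally show False by simp
  qed
  obtain a :: "real^'x" where a0: "a \<noteq> 0" and aU: "\<forall>z\<in>U. 0 \<le> inner a z"
    using separating_hyperplane_set_0[OF cU n0] by blast
  have inner_eq: "inner a z = (\<Sum>x\<in>UNIV. a$x * z$x)" for z :: "real^'x"
    by (simp add: inner_vec_def)
  define p0 :: "'y \<Rightarrow> real" where "p0 = (\<lambda>_. 1 / real CARD('y))"
  have p0: "p0 \<in> pdists" unfolding p0_def by (rule pdists_nonempty)
  have anr: "0 \<le> a$x0" for x0
  proof (rule ccontr)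
    assume "\<not> 0 \<le> a$x0"
    then have neg: "a$x0 < 0" by simp
    define C where "C = (\<Sum>x\<in>UNIV. a$x * (\<phi> p0 x - v + 1))"
    define t where "t = (\<bar>C\<bar> + 1) / (- a$x0)"
    have t0: "0 \<le> t" unfolding t_def using neg by (intro divide_nonneg_pos) auto
    define z :: "real^'x" where "z = (\<chi> x. \<phi> p0 x - v + 1 + (if x = x0 then t else 0))"
    have "z \<in> U" unfolding U_def z_def using t0 by (intro CollectI bexI[OF _ p0]) auto
    then have "0 \<le> inner a z" using aU by blast
    also have "inner a z = C + a$x0 * t"
      unfolding inner_eq z_def C_def using sum_delta_add[of "\<lambda>x. a$x" "\<lambda>x. \<phi> p0 x - v + 1" x0 t] by simp
    also have "a$x0 * t = - (\<bar>C\<bar> + 1)" unfolding t_def using neg by simp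
    finally show False by linarith
  qed
  define A where "A = (\<Sum>x\<in>UNIV. a$x)"
  have A0: "0 < A"
  proof -
    obtain x1 where "a$x1 \<noteq> 0" using a0 by (metis vec_eq_iff zero_index)
    then have "0 < a$x1" using anr[of x1] by simp
    then show ?thesis unfolding A_def using anr by (intro sum_pos2[of UNIV x1]) auto
  qed
  have main: "v * A \<le> (\<Sum>x\<in>UNIV. a$x * \<phi> pY x)" if pY: "pY \<in> pdists" for pY
  proof (rule field_le_epsilon)
    fix e :: real assume e: "0 < e"
    define z :: "real^'x" where "z = (\<chi> x. \<phi> pY x - v + e / A)"
    have "z \<in> U" unfolding U_def z_def using e A0 by (intro CollectI bexI[OF _ pY]) auto
    then have "0 \<le> inner a z" using aU by blast
    also have "inner a z = (\<Sum>x\<in>UNIV. a$x * \<phi> pY x) - v * A + e"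
      unfolding inner_eq z_def A_def using A0 unfolding A_def
      by (simp add: algebra_simps sum.distrib sum_subtractf flip: sum_distrib_left sum_distrib_right sum_divide_distrib)
    finally show "v * A \<le> (\<Sum>x\<in>UNIV. a$x * \<phi> pY x) + e" by simp
  qed
  define q where "q x = a$x / A" for x
  have q: "q \<in> pdists" unfolding pdists_def q_def A_def using anr A0
    by (auto simp: A_def simp flip: sum_divide_distrib)
  have "v \<le> (\<Sum>x\<in>UNIV. q x * \<phi> pY x)" if "pY \<in> pdists" for pY
  proof -
    have "(\<Sum>x\<in>UNIV. q x * \<phi> pY x) = (\<Sum>x\<in>UNIV. a$x * \<phi> pY x) / A"
      unfolding q_def by (simp add: sum_divide_distrib)
    then show ?thesis using main[OF that] A0 by (simp add: pos_le_divide_eq)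
  qed
  then show ?thesis using q unfolding v_def \<phi>_def by blast
qed

lemma V0_le_Rmax:
  fixes d :: "'x::finite \<Rightarrow> 'y::finite \<Rightarrow> real"
  assumes P: "P \<in> pdists" and dnn: "\<forall>x y. 0 \<le> d x y" and nu: "0 \<le> \<nu>"
  shows "ereal (- \<nu> * \<Delta> + Gr d P 0 \<nu>) \<le> Rmax d \<Delta>"
proof -
  obtain q where q: "q \<in> pdists" and
    h: "\<forall>pY\<in>(pdists :: ('y \<Rightarrow> real) set). Gr d P 0 \<nu> \<le> (\<Sum>x\<in>UNIV. q x * (- ln (sfun d pY \<nu> x)))"
    using minimax_sep[OF assms] by blast
  have "ereal (- \<nu> * \<Delta> + Gr d P 0 \<nu>) \<le> RD d \<Delta> q"
    unfolding RD_def
  proof (rule INF_greatest)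
    fix V assume "V \<in> {V \<in> channels. avg_dist q V d \<le> \<Delta>}"
    then have V: "V \<in> channels" and av: "avg_dist q V d \<le> \<Delta>" by auto
    have "Gr d P 0 \<nu> \<le> (\<Sum>x\<in>UNIV. q x * (- ln (sfun d (out_dist q V) \<nu> x)))"
      using h out_dist_pdists[OF q V] by blast
    also have "\<dots> \<le> mutual_info q V + \<nu> * avg_dist q V d" by (rule weak_duality[OF q V])
    also have "\<nu> * avg_dist q V d \<le> \<nu> * \<Delta>" using av nu by (intro mult_left_mono)
    finally show "ereal (- \<nu> * \<Delta> + Gr d P 0 \<nu>) \<le> ereal (mutual_info q V)" by simp
  qed
  also have "\<dots> \<le> Rmax d \<Delta>" unfolding Rmax_def using q by (rule SUP_upper)
  finally show ?thesis .
qed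


lemma ereal_add_le_split:
  fixes I :: ereal
  assumes "ereal a + I \<le> ereal b" shows "I \<le> ereal (b - a)"
  using assms by (cases I) auto

lemma Gr_pos_eq:
  assumes P: "P \<in> pdists" and dnn: "\<forall>x y. 0 \<le> d x y" and nu: "0 \<le> \<nu>" and mu: "0 < \<mu>"
  shows "Gr d P \<mu> \<nu> = \<mu> * Lr d P (1/\<mu>) \<nu>"
proof (rule antisym)
  have "Lr d P (1/\<mu>) \<nu> \<ge> Gr d P \<mu> \<nu> / \<mu>"
    unfolding Lr_def
  proof (rule cInf_greatest)
    show "Lf d P (1 / \<mu>) \<nu> ` pdists \<noteq> {}" using pdists_ne by blast
  next
    fix l assume "l \<in> Lf d P (1 / \<mu>) \<nu> ` pdists"
    then obtain pY where pY: "pY \<in> pdists" and l: "l = Lf d P (1 / \<mu>) \<nu> pY" by auto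
    have "Gr d P \<mu> \<nu> \<le> G d \<mu> \<nu> pY P" using assms pY by (intro Gr_le) auto
    then show "Gr d P \<mu> \<nu> / \<mu> \<le> l" using mu by (simp add: l G_pos pos_divide_le_eq mult.commute)
  qed
  then show "Gr d P \<mu> \<nu> \<le> \<mu> * Lr d P (1/\<mu>) \<nu>" using mu by (simp add: pos_divide_le_eq mult.commute)
next
  show "\<mu> * Lr d P (1/\<mu>) \<nu> \<le> Gr d P \<mu> \<nu>"
    unfolding Gr_def
  proof (rule cInf_greatest)
    show "(\<lambda>pY. G d \<mu> \<nu> pY P) ` pdists \<noteq> {}" using pdists_ne by blast
  next
    fix l assume "l \<in> (\<lambda>pY. G d \<mu> \<nu> pY P) ` pdists"
    then obtain pY where pY: "pY \<in> pdists" and l: "l = G d \<mu> \<nu> pY P" by auto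
    have "Lr d P (1/\<mu>) \<nu> \<le> Lf d P (1/\<mu>) \<nu> pY" using assms pY by (intro Lr_le) auto
    then show "\<mu> * Lr d P (1/\<mu>) \<nu> \<le> l" using mu by (simp add: l G_pos)
  qed
qed

lemma Lr_le_Gr0:
  assumes P: "P \<in> pdists" and dnn: "\<forall>x y. 0 \<le> d x y" and nu: "0 \<le> \<nu>" and rho: "0 < \<rho>"
  shows "Lr d P \<rho> \<nu> \<le> \<rho> * Gr d P 0 \<nu>"
proof -
  have "Lr d P \<rho> \<nu> / \<rho> \<le> Gr d P 0 \<nu>"
    unfolding Gr_def
  proof (rule cInf_greatest)
    show "(\<lambda>pY. G d 0 \<nu> pY P) ` pdists \<noteq> {}" using pdists_ne by blast
  next
    fix l assume "l \<in> (\<lambda>pY. G d 0 \<nu> pY P) ` pdists"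
    then obtain pY where pY: "pY \<in> pdists" and l: "l = G d 0 \<nu> pY P" by auto
    have "Lr d P \<rho> \<nu> \<le> Lf d P \<rho> \<nu> pY" using assms pY by (intro Lr_le) auto
    also have "\<dots> \<le> \<rho> * G d 0 \<nu> pY P" using assms pY by (intro Lf_le_G0) auto
    finally show "Lr d P \<rho> \<nu> / \<rho> \<le> l" using rho by (simp add: l pos_divide_le_eq mult.commute)
  qed
  then show ?thesis using rho by (simp add: pos_divide_le_eq mult.commute)
qed

lemma EB_eq:
  assumes P: "P \<in> pdists" and dnn: "\<forall>x y. 0 \<le> d x y"
  shows "EB d R \<Delta> P = (SUP \<rho>\<in>{0..}. ereal (\<rho> * R) +
      (INF \<nu>\<in>{0..}. ereal (\<rho> * \<nu> * \<Delta> - Lr d P \<rho> \<nu>)))"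
  unfolding EB_def
proof (intro SUP_cong refl arg_cong2[where f = "(+)"] INF_cong)
  fix \<rho> \<nu> :: real assume "\<rho> \<in> {0..}" "\<nu> \<in> {0..}"
  then have "(INF pY\<in>pdists. ereal (Lf d P \<rho> \<nu> pY)) = ereal (Lr d P \<rho> \<nu>)"
    using assms by (intro INF_ereal_Lf) auto
  then show "ereal (\<rho> * \<nu> * \<Delta>) - (INF pY\<in>pdists. ereal (ln (\<Sum>x\<in>UNIV. P x * (\<Sum>y\<in>UNIV. pY y * exp (- \<nu> * d x y)) powr - \<rho>)))
     = ereal (\<rho> * \<nu> * \<Delta> - Lr d P \<rho> \<nu>)"
    by (simp add: Lf_def sfun_def)
qed

lemma RHS_eq:
  fixes d :: "'x::finite \<Rightarrow> 'y::finite \<Rightarrow> real"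
  assumes P: "P \<in> pdists" and dnn: "\<forall>x y. 0 \<le> d x y"
  shows "(INF \<mu>\<in>{0..}. SUP \<nu>\<in>{0..}.
       ereal (\<mu> * E - \<nu> * \<Delta>) + (INF pY\<in>(pdists :: ('y \<Rightarrow> real) set). ereal (G d \<mu> \<nu> pY P)))
    = (INF \<mu>\<in>{0..}. SUP \<nu>\<in>{0..}. ereal (\<mu> * E - \<nu> * \<Delta> + Gr d P \<mu> \<nu>))"
proof (intro INF_cong SUP_cong refl)
  fix \<mu> \<nu> :: real assume "\<mu> \<in> {0..}" "\<nu> \<in> {0..}"
  then show "ereal (\<mu> * E - \<nu> * \<Delta>) + (INF pY\<in>(pdists :: ('y \<Rightarrow> real) set). ereal (G d \<mu> \<nu> pY P)) =
     ereal (\<mu> * E - \<nu> * \<Delta> + Gr d P \<mu> \<nu>)"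
    using assms by (subst INF_ereal_G) auto
qed


theorem theorem2:
  fixes d :: "'x::finite \<Rightarrow> 'y::finite \<Rightarrow> real"
    and P :: "'x \<Rightarrow> real" and \<Delta> E :: real
  assumes d_nonneg: "\<forall>x y. 0 \<le> d x y"
    and d_zero: "Max (range (\<lambda>x. Min (range (d x)))) = 0"
    and P: "P \<in> pdists"
    and Delta: "0 \<le> \<Delta>"
    and E: "0 \<le> E"
  shows "RB d E \<Delta> P =
    (INF \<mu>\<in>{0..}. SUP \<nu>\<in>{0..}.
       ereal (\<mu> * E - \<nu> * \<Delta>) + (INF pY\<in>(pdists :: ('y \<Rightarrow> real) set). ereal (G d \<mu> \<nu> pY P)))"
proof -
  define h where "h \<rho> \<nu> = \<rho> * \<nu> * \<Delta> - Lr d P \<rho> \<nu>" for \<rho> \<nu>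
  define I where "I \<rho> = (INF \<nu>\<in>{0..}. ereal (h \<rho> \<nu>))" for \<rho>
  define g where "g \<mu> \<nu> = \<mu> * E - \<nu> * \<Delta> + Gr d P \<mu> \<nu>" for \<mu> \<nu>
  define T where "T = (INF \<mu>\<in>{0..}. SUP \<nu>\<in>{0..}. ereal (g \<mu> \<nu>))"
  define S where "S = {R. 0 \<le> R \<and> ereal R \<le> Rmax d \<Delta> \<and> EB d R \<Delta> P \<le> ereal E}"
  have EBle: "EB d R \<Delta> P \<le> ereal E \<longleftrightarrow> (\<forall>\<rho>\<ge>0. ereal (\<rho> * R) + I \<rho> \<le> ereal E)" for R
    unfolding EB_eq[OF P d_nonneg] I_def h_def by (auto simp: SUP_le_iff)
  have RHS: "?thesis \<longleftrightarrow> RB d E \<Delta> P = T"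
    unfolding RHS_eq[OF P d_nonneg] T_def g_def ..
  have RB: "RB d E \<Delta> P = Sup (ereal ` S)" unfolding RB_def S_def ..
  have Ih: "I \<rho> \<le> ereal (h \<rho> \<nu>)" if "0 \<le> \<nu>" for \<rho> \<nu>
    unfolding I_def using that by (intro INF_lower) auto
  have h0: "h \<rho> 0 = 0" for \<rho> unfolding h_def using P by (simp add: Lr_nu0)
  have dir1: "Sup (ereal ` S) \<le> T"
  proof (rule Sup_least)
    fix r assume "r \<in> ereal ` S"
    then obtain R where R: "R \<in> S" and r: "r = ereal R" by auto
    have Rc: "\<And>\<rho>. 0 \<le> \<rho> \<Longrightarrow> I \<rho> \<le> ereal (E - \<rho> * R)"
      using R EBle[of R] by (auto simp: S_def intro: ereal_add_le_split)
    show "r \<le> T" unfolding T_def r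
    proof (rule INF_greatest)
      fix \<mu> :: real assume "\<mu> \<in> {0..}"
      then have mu: "0 \<le> \<mu>" by simp
      show "ereal R \<le> (SUP \<nu>\<in>{0..}. ereal (g \<mu> \<nu>))"
      proof (cases "\<mu> = 0")
        case False
        then have mu0: "0 < \<mu>" using mu by simp
        define \<rho> where "\<rho> = 1 / \<mu>"
        have rho0: "0 < \<rho>" using mu0 by (simp add: \<rho>_def)
        show ?thesis
        proof (rule ereal_le_epsilon2)
          fix e :: real assume e: "0 < e"
          have "I \<rho> < ereal (E - \<rho> * R + \<rho> * e)"
            using Rc[of \<rho>] rho0 e by (smt (verit, best) ereal_less_eq(3) less_eq_ereal_def mult_pos_pos order_trans_rules(21))
          then obtain \<nu> where nu: "0 \<le> \<nu>" and hl: "h \<rho> \<nu> < E - \<rho> * R + \<rho> * e"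
            unfolding I_def by (auto simp: INF_less_iff)
          have "\<mu> * h \<rho> \<nu> < \<mu> * (E - \<rho> * R + \<rho> * e)" using hl mu0 by simp
          moreover have "\<mu> * h \<rho> \<nu> = \<nu> * \<Delta> - \<mu> * Lr d P \<rho> \<nu>"
            using mu0 by (simp add: h_def \<rho>_def field_simps)
          moreover have "\<mu> * (E - \<rho> * R + \<rho> * e) = \<mu> * E - R + e"
            using mu0 by (simp add: \<rho>_def field_simps)
          ultimately have "R < g \<mu> \<nu> + e"
            using Gr_pos_eq[OF P d_nonneg nu mu0] unfolding g_def \<rho>_def by linarith
          then have "ereal R \<le> ereal (g \<mu> \<nu>) + ereal e" by simp
          also have "ereal (g \<mu> \<nu>) \<le> (SUP \<nu>\<in>{0..}. ereal (g \<mu> \<nu>))" using nu by (intro SUP_upper) auto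
          finally show "ereal R \<le> (SUP \<nu>\<in>{0..}. ereal (g \<mu> \<nu>)) + ereal e" by (simp add: add_right_mono)
        qed
      next
        case True
        show ?thesis
        proof (rule ereal_le_epsilon2)
          fix e :: real assume e: "0 < e"
          define \<rho> where "\<rho> = (E + 1) / e"
          have rho0: "0 < \<rho>" using e E by (simp add: \<rho>_def)
          have Ee: "E + 1 = \<rho> * e" using e by (simp add: \<rho>_def)
          have "I \<rho> < ereal (E - \<rho> * R + 1)"
            using Rc[of \<rho>] rho0 by (smt (verit, best) ereal_less_eq(3) less_eq_ereal_def order_trans_rules(21))
          then obtain \<nu> where nu: "0 \<le> \<nu>" and hl: "h \<rho> \<nu> < E - \<rho> * R + 1"
            unfolding I_def by (auto simp: INF_less_iff)
          have "Lr d P \<rho> \<nu> \<le> \<rho> * Gr d P 0 \<nu>" by (rule Lr_le_Gr0[OF P d_nonneg nu rho0])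
          then have "\<rho> * R < \<rho> * e + \<rho> * (- \<nu> * \<Delta> + Gr d P 0 \<nu>)"
            using hl Ee unfolding h_def by (simp add: algebra_simps)
          then have "\<rho> * R < \<rho> * (e + (- \<nu> * \<Delta> + Gr d P 0 \<nu>))" by (simp add: algebra_simps)
          then have "R < e + (- \<nu> * \<Delta> + Gr d P 0 \<nu>)" using rho0 by simp
          then have "R < g \<mu> \<nu> + e" using True by (simp add: g_def)
          then have "ereal R \<le> ereal (g \<mu> \<nu>) + ereal e" by simp
          also have "ereal (g \<mu> \<nu>) \<le> (SUP \<nu>\<in>{0..}. ereal (g \<mu> \<nu>))" using nu by (intro SUP_upper) auto
          finally show "ereal R \<le> (SUP \<nu>\<in>{0..}. ereal (g \<mu> \<nu>)) + ereal e" by (simp add: add_right_mono)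
        qed
      qed
    qed
  qed
  have S0: "0 \<in> S"
  proof -
    have "ereal (- 0 * \<Delta> + Gr d P 0 0) \<le> Rmax d \<Delta>" by (rule V0_le_Rmax[OF P d_nonneg]) simp
    then have "ereal 0 \<le> Rmax d \<Delta>" using P by (simp add: Gr_nu0)
    moreover have "EB d 0 \<Delta> P \<le> ereal E"
    proof -
      have "ereal (\<rho> * 0) + I \<rho> \<le> ereal E" if "0 \<le> \<rho>" for \<rho>
        using Ih[of 0 \<rho>] h0 E by (simp add: order_trans)
      then show ?thesis using EBle by blast
    qed
    ultimately show ?thesis by (simp add: S_def)
  qed
  have RB0: "0 \<le> Sup (ereal ` S)" using S0 by (metis Sup_upper image_eqI zero_ereal_def)
  have dir2: "T \<le> Sup (ereal ` S)"
  proof (rule ccontr)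
    assume "\<not> T \<le> Sup (ereal ` S)"
    then have lt: "Sup (ereal ` S) < T" by simp
    then obtain R where R1: "Sup (ereal ` S) < ereal R" and R2: "ereal R < T" using ereal_dense2 by blast
    have "(0::ereal) < ereal R" using RB0 R1 by (rule le_less_trans)
    then have R0: "0 \<le> R" by simp
    have Tle: "T \<le> (SUP \<nu>\<in>{0..}. ereal (g \<mu> \<nu>))" if "0 \<le> \<mu>" for \<mu>
      unfolding T_def using that by (intro INF_lower) auto
    have "R \<in> S"
    proof -
      have "ereal R < (SUP \<nu>\<in>{0..}. ereal (g 0 \<nu>))" using R2 Tle[of 0] by simp
      then obtain \<nu> where nu: "0 \<le> \<nu>" and Rl: "R < g 0 \<nu>" by (auto simp: less_SUP_iff)
      have "ereal R \<le> ereal (- \<nu> * \<Delta> + Gr d P 0 \<nu>)" using Rl by (simp add: g_def)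
      also have "\<dots> \<le> Rmax d \<Delta>" by (rule V0_le_Rmax[OF P d_nonneg nu])
      finally have Rm: "ereal R \<le> Rmax d \<Delta>" .
      have "ereal (\<rho> * R) + I \<rho> \<le> ereal E" if rho: "0 \<le> \<rho>" for \<rho>
      proof (cases "\<rho> = 0")
        case True
        then show ?thesis using Ih[of 0 \<rho>] h0 E by (simp add: order_trans)
      next
        case False
        then have rho0: "0 < \<rho>" using rho by simp
        define \<mu> where "\<mu> = 1 / \<rho>"
        have mu0: "0 < \<mu>" using rho0 by (simp add: \<mu>_def)
        have "ereal R < (SUP \<nu>\<in>{0..}. ereal (g \<mu> \<nu>))" using R2 Tle[of \<mu>] mu0 by simp
        then obtain \<nu> where nu: "0 \<le> \<nu>" and Rl: "R < g \<mu> \<nu>" by (auto simp: less_SUP_iff)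
        have rm: "1 / \<mu> = \<rho>" using rho0 by (simp add: \<mu>_def)
        have "R < \<mu> * E - \<nu> * \<Delta> + \<mu> * Lr d P \<rho> \<nu>"
          using Rl Gr_pos_eq[OF P d_nonneg nu mu0] by (simp add: g_def rm)
        then have "\<rho> * R < \<rho> * (\<mu> * E - \<nu> * \<Delta> + \<mu> * Lr d P \<rho> \<nu>)" using rho0 by simp
        moreover have "\<rho> * (\<mu> * E - \<nu> * \<Delta> + \<mu> * Lr d P \<rho> \<nu>) = E - \<rho> * \<nu> * \<Delta> + Lr d P \<rho> \<nu>"
          using rho0 by (simp add: \<mu>_def field_simps)
        ultimately have "\<rho> * R + h \<rho> \<nu> < E" unfolding h_def by linarith
        then have "ereal (\<rho> * R) + ereal (h \<rho> \<nu>) \<le> ereal E" by simp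
        moreover have "ereal (\<rho> * R) + I \<rho> \<le> ereal (\<rho> * R) + ereal (h \<rho> \<nu>)"
          using Ih[OF nu, of \<rho>] by (intro add_left_mono)
        ultimately show ?thesis by (rule order_trans[rotated])
      qed
      then have "EB d R \<Delta> P \<le> ereal E" using EBle by blast
      then show ?thesis using R0 Rm by (simp add: S_def)
    qed
    then have "ereal R \<le> Sup (ereal ` S)" by (intro Sup_upper) auto
    then show False using R1 by simp
  qed
  have "RB d E \<Delta> P = T" unfolding RB using dir1 dir2 by (rule antisym)
  then show ?thesis using RHS by simp
qed

end
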